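(* There exists a unitary on $\mathbb{C}^2\otimes\mathbb{C}^2\otimes\mathbb{C}^2$ of the form $L_1\,C_1\,L_2\,C_2\,L_3\,C_3\,L_4$, where $L_1,\dots,L_4$ are local unitaries (each of the form $V\otimes W\otimes X$ with $V,W,X$ $2\times2$ unitaries) and $C_1,C_2,C_3$ are CNOT gates acting respectively on the qubit pairs $\{A,B\}$, $\{B,C\}$, $\{C,A\}$ (identity on the remaining qubit), whose Schmidt rank equals $7$.
   Context: $T=|0\rangle\langle0|\otimes I_2+|1\rangle\langle1|\otimes\sigma_1$ is the CNOT gate on two qubits (first control, second target), where $\sigma_1=\begin{bmatrix}0&1\\1&0\end{bmatrix}$. For a matrix $U$ on $\mathbb{C}^2\otimes\mathbb{C}^2\otimes\mathbb{C}^2$ (systems $A,B,C$), its Schmidt rank $\mathrm{sr}(U)$ is the least integer $r$ such that $U=\sum_{j=1}^r A_j\otimes B_j\otimes C_j$ with $A_j,B_j,C_j$ complex $2\times 2$ matrices (i.e. the tensor rank of $U$). *)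

theory Defs
  imports "HOL-Analysis.Analysis"
begin

text \<open>Complex 2x2 matrices are elements of type complex^2^2 (rows/columns indexed by the
  two-element type 2, whose elements 0 and 1 label the computational basis).
  Operators on C^2 (x) C^2 (x) C^2 (systems A, B, C) are 8x8 matrices indexed by
  the triple type 2 \<times> 2 \<times> 2, with the index (a,b,c) standing for |a>|b>|c>.\<close>

type_synonym mat2 = "complex^2^2"
type_synonym mat8 = "complex^(2\<times>2\<times>2)^(2\<times>2\<times>2)"

definition conj_transpose2 :: "mat2 \<Rightarrow> mat2" where
  "conj_transpose2 U = (\<chi> i j. cnj (U $ j $ i))"

definition unitary2 :: "mat2 \<Rightarrow> bool" where
  "unitary2 U \<longleftrightarrow> conj_transpose2 U ** U = mat 1 \<and> U ** conj_transpose2 U = mat 1"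

definition tensor3 :: "mat2 \<Rightarrow> mat2 \<Rightarrow> mat2 \<Rightarrow> mat8" where
  "tensor3 A B C = (\<chi> i j. A $ fst i $ fst j * B $ fst (snd i) $ fst (snd j)
                           * C $ snd (snd i) $ snd (snd j))"

definition local_unitary :: "mat8 \<Rightarrow> bool" where
  "local_unitary L \<longleftrightarrow> (\<exists>V W X. unitary2 V \<and> unitary2 W \<and> unitary2 X \<and> L = tensor3 V W X)"

definition proj0 :: mat2 where "proj0 = (\<chi> i j. if i = 0 \<and> j = 0 then 1 else 0)"
definition proj1 :: mat2 where "proj1 = (\<chi> i j. if i = 1 \<and> j = 1 then 1 else 0)"
definition id2 :: mat2 where "id2 = mat 1"
definition sigma1 :: mat2 where "sigma1 = (\<chi> i j. if i \<noteq> j then 1 else 0)"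

text \<open>CNOT gates T = |0><0| (x) I + |1><1| (x) sigma_1 on the ordered pairs (A,B), (B,C), (C,A)
  (first = control, second = target), identity on the remaining qubit.\<close>
definition CNOT_AB :: mat8 where
  "CNOT_AB = tensor3 proj0 id2 id2 + tensor3 proj1 sigma1 id2"
definition CNOT_BC :: mat8 where
  "CNOT_BC = tensor3 id2 proj0 id2 + tensor3 id2 proj1 sigma1"
definition CNOT_CA :: mat8 where
  "CNOT_CA = tensor3 id2 id2 proj0 + tensor3 sigma1 id2 proj1"

definition schmidt_rank :: "mat8 \<Rightarrow> nat" where
  "schmidt_rank U = (LEAST r. \<exists>A B C :: nat \<Rightarrow> mat2.
       U = (\<Sum>j<r. tensor3 (A j) (B j) (C j)))"

end

theory Submission
  imports Defs
begin

lemma two_add: "(1::2) + 1 = 0" by simp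
lemma t2: "(2::2) = 0" by (metis one_add_one two_add)
lemma ex2: "(x::2) = 0 \<or> x = 1"
  using exhaust_2[of x] t2 by auto
lemma UNIV2: "(UNIV::2 set) = {0,1}" using ex2 by auto
lemma sum22: "(\<Sum>x\<in>(UNIV::(2\<times>2) set). f x) = f (0,0) + f (0,1) + f (1,0) + f (1,1)"
  by (simp add: UNIV_Times_UNIV[symmetric] UNIV2 add.assoc del: UNIV_Times_UNIV)
lemma UNIV22: "(UNIV::(2\<times>2) set) = {(0,0),(0,1),(1,0),(1,1)}"
  by (auto simp: UNIV_Times_UNIV[symmetric] UNIV2 simp del: UNIV_Times_UNIV)

definition dot :: "complex^'n \<Rightarrow> complex^'n \<Rightarrow> complex" where
  "dot x y = (\<Sum>i\<in>UNIV. x$i * y$i)"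
definition detp :: "complex^(2\<times>2) \<Rightarrow> complex" where
  "detp x = x$(0,0)*x$(1,0) - x$(0,1)*x$(1,1)"
definition Bf :: "complex^(2\<times>2) \<Rightarrow> complex^(2\<times>2) \<Rightarrow> complex" where
  "Bf x y = x$(0,0)*y$(1,0) + x$(1,0)*y$(0,0) - x$(0,1)*y$(1,1) - x$(1,1)*y$(0,1)"
definition Jm :: "complex^(2\<times>2)^(2\<times>2)" where
  "Jm = (\<chi> p q. if (p,q) = ((0,0),(1,0)) \<or> (p,q) = ((1,0),(0,0)) then 1
     else if (p,q) = ((0,1),(1,1)) \<or> (p,q) = ((1,1),(0,1)) then -1 else 0)"

lemma dot_lin: "dot (s *s x + t *s y) z = s * dot x z + t * dot y z"
  by (simp add: dot_def sum_distrib_left sum.distrib algebra_simps)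

lemma detp_comb: "detp (s *s x + t *s y) = s^2 * detp x + t^2 * detp y + s*t * Bf x y"
  by (simp add: detp_def Bf_def power2_eq_square algebra_simps)

lemma Bf_diag: "Bf x x = 2 * detp x"
  by (simp add: detp_def Bf_def algebra_simps)

lemma Jm_ent: "Jm $ p $ q = (if (p,q) = ((0,0),(1,0)) \<or> (p,q) = ((1,0),(0,0)) then 1
     else if (p,q) = ((0,1),(1,1)) \<or> (p,q) = ((1,1),(0,1)) then -1 else 0)"
  by (simp add: Jm_def)

lemma JJ: "Jm ** Jm = mat 1"
proof (rule vec_eq_iff[THEN iffD2], rule allI, rule vec_eq_iff[THEN iffD2], rule allI)
  fix p q :: "2\<times>2"
  have "p \<in> {(0,0),(0,1),(1,0),(1,1)}" "q \<in> {(0,0),(0,1),(1,0),(1,1)}" using UNIV22 by blast+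
  then show "(Jm ** Jm) $ p $ q = mat 1 $ p $ q"
    unfolding matrix_matrix_mult_def mat_def by (auto simp: sum22 Jm_ent)
qed

lemma gram_ent: "(transpose B ** Jm ** B) $ m $ n = Bf (column m B) (column n B)"
  unfolding matrix_matrix_mult_def transpose_def Bf_def column_def
  by (simp add: sum22 Jm_ent)

lemma det_kill:
  fixes a b c d x y :: complex
  assumes "a*x + b*y = 0" "d*x + c*y = 0"
  shows "(a*c - b*d)*x = 0" "(a*c - b*d)*y = 0"
proof -
  have "(a*c - b*d)*x = c*(a*x+b*y) - b*(d*x+c*y)" "(a*c - b*d)*y = a*(d*x+c*y) - d*(a*x+b*y)" by algebra+
  then show "(a*c - b*d)*x = 0" "(a*c - b*d)*y = 0" unfolding assms by simp_all
qed
lemma cases22: "(i::2\<times>2) = (0,0) \<or> i = (0,1) \<or> i = (1,0) \<or> i = (1,1)"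
proof -
  obtain x y where "i = (x,y)" by fastforce
  then show ?thesis using ex2[of x] ex2[of y] by auto
qed
lemma detp_zero:
  fixes w l :: "complex^(2\<times>2)"
  assumes "w \<noteq> 0"
    "l$(0,0)*w$(0,0) + l$(0,1)*w$(1,1) = 0" "l$(1,1)*w$(0,0) + l$(1,0)*w$(1,1) = 0"
    "l$(0,0)*w$(1,0) + l$(0,1)*w$(0,1) = 0" "l$(1,1)*w$(1,0) + l$(1,0)*w$(0,1) = 0"
  shows "detp l = 0"
proof -
  note k1 = det_kill[OF assms(2,3)] and k2 = det_kill[OF assms(4,5)]
  have d: "detp l = l$(0,0)*l$(1,0) - l$(0,1)*l$(1,1)" by (simp add: detp_def)
  obtain i where i: "w$i \<noteq> 0" using assms(1) by (auto simp: vec_eq_iff)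
  have "i = (0,0) \<or> i = (0,1) \<or> i = (1,0) \<or> i = (1,1)" by (rule cases22)
  then have "detp l * w$i = 0" unfolding d
  proof (elim disjE)
    assume "i = (0,0)" then show "(l$(0,0)*l$(1,0) - l$(0,1)*l$(1,1)) * w$i = 0" using k1(1) by simp
  next
    assume "i = (0,1)" then show "(l$(0,0)*l$(1,0) - l$(0,1)*l$(1,1)) * w$i = 0" using k2(2) by simp
  next
    assume "i = (1,0)" then show "(l$(0,0)*l$(1,0) - l$(0,1)*l$(1,1)) * w$i = 0" using k2(1) by simp
  next
    assume "i = (1,1)" then show "(l$(0,0)*l$(1,0) - l$(0,1)*l$(1,1)) * w$i = 0" using k1(2) by simp
  qed
  then show ?thesis using i by simp

qed

lemma t3: "(3::2) = 1"
proof - have "(3::2) = 2 + 1" by simp then show ?thesis by (simp add: t2) qed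
lemma tensor3_entry[simp]: "tensor3 A B C $ (p,q,r) $ (a,b,c) = A$p$a * B$q$b * C$r$c"
  by (simp add: tensor3_def)

lemma perm_mult:
  assumes "\<And>i k. A$i$k = (if i = f k then 1 else 0)" "\<And>k j. B$k$j = (if k = g j then 1 else 0)"
  shows "(A ** B)$i$j = (if i = f (g j) then (1::'a::comm_ring_1) else 0)"
proof -
  have "(A ** B)$i$j = (\<Sum>k\<in>UNIV. (if i = f k then 1 else 0) * (if k = g j then 1 else 0))"
    unfolding matrix_matrix_mult_def by (simp add: assms)
  also have "\<dots> = (\<Sum>k\<in>UNIV. if k = g j then (if i = f (g j) then 1 else 0) else 0)"
    by (rule sum.cong) auto
  also have "\<dots> = (if i = f (g j) then 1 else 0)" by (simp add: sum.delta')
  finally show ?thesis .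
qed

definition fAB :: "2\<times>2\<times>2 \<Rightarrow> 2\<times>2\<times>2" where "fAB x = (case x of (a,b,c) \<Rightarrow> (a, a+b, c))"
definition fBC :: "2\<times>2\<times>2 \<Rightarrow> 2\<times>2\<times>2" where "fBC x = (case x of (a,b,c) \<Rightarrow> (a, b, b+c))"
definition fCA :: "2\<times>2\<times>2 \<Rightarrow> 2\<times>2\<times>2" where "fCA x = (case x of (a,b,c) \<Rightarrow> (a+c, b, c))"

lemma ent_simps: "proj0$i$j = (if i = 0 \<and> j = 0 then 1 else 0)" "proj1$i$j = (if i = 1 \<and> j = 1 then 1 else 0)"
  "id2$i$j = (if i = j then 1 else 0)" "sigma1$i$j = (if i \<noteq> j then 1 else 0)"
  by (simp_all add: proj0_def proj1_def id2_def sigma1_def mat_def)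

lemma AB_ent: "CNOT_AB $ i $ j = (if i = fAB j then 1 else 0)"
proof -
  obtain p q r where i: "i = (p,q,r)" by (metis prod_cases3)
  obtain a b c where j: "j = (a,b,c)" by (metis prod_cases3)
  show ?thesis unfolding i j CNOT_AB_def fAB_def
    using ex2[of p] ex2[of q] ex2[of r] ex2[of a] ex2[of b] ex2[of c]
    by (auto simp: ent_simps)
qed
lemma BC_ent: "CNOT_BC $ i $ j = (if i = fBC j then 1 else 0)"
proof -
  obtain p q r where i: "i = (p,q,r)" by (metis prod_cases3)
  obtain a b c where j: "j = (a,b,c)" by (metis prod_cases3)
  show ?thesis unfolding i j CNOT_BC_def fBC_def
    using ex2[of p] ex2[of q] ex2[of r] ex2[of a] ex2[of b] ex2[of c]
    by (auto simp: ent_simps)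
qed
lemma CA_ent: "CNOT_CA $ i $ j = (if i = fCA j then 1 else 0)"
proof -
  obtain p q r where i: "i = (p,q,r)" by (metis prod_cases3)
  obtain a b c where j: "j = (a,b,c)" by (metis prod_cases3)
  show ?thesis unfolding i j CNOT_CA_def fCA_def
    using ex2[of p] ex2[of q] ex2[of r] ex2[of a] ex2[of b] ex2[of c]
    by (auto simp: ent_simps)
qed

definition U :: mat8 where "U = CNOT_AB ** CNOT_BC ** CNOT_CA"

lemma U_ent: "U $ (p,q,r) $ (a,b,c) = (if p = a+c \<and> q = a+b+c \<and> r = b+c then 1 else 0)"
proof -
  have "U $ (p,q,r) $ (a,b,c) = (if (p,q,r) = fAB (fBC (fCA (a,b,c))) then 1 else 0)"
    unfolding U_def
    by (rule perm_mult[OF perm_mult[OF AB_ent BC_ent] CA_ent])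
  also have "\<dots> = (if p = a+c \<and> q = a+b+c \<and> r = b+c then 1 else 0)"
    using ex2[of p] ex2[of q] ex2[of r] ex2[of a] ex2[of b] ex2[of c]
    by (auto simp: fAB_def fBC_def fCA_def)
  finally show ?thesis .
qed

definition M2 :: "complex \<Rightarrow> complex \<Rightarrow> complex \<Rightarrow> complex \<Rightarrow> mat2" where
  "M2 x y z w = (\<chi> i j. if i = 0 then (if j = 0 then x else y) else (if j = 0 then z else w))"
lemma M2_ent[simp]: "M2 x y z w $ 0 $ 0 = x" "M2 x y z w $ 0 $ 1 = y" "M2 x y z w $ 1 $ 0 = z" "M2 x y z w $ 1 $ 1 = w"
  by (simp_all add: M2_def)

definition "As = [M2 1 0 1 0, M2 0 1 1 0, M2 1 0 0 0, M2 0 0 1 0, M2 1 0 0 1, M2 (-1) 1 0 0, M2 0 0 (-1) 1]"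
definition "Bs = [M2 1 1 0 0, M2 1 0 0 0, M2 0 (-1) 0 1, M2 (-1) 0 1 0, M2 0 1 0 0, M2 1 0 0 1, M2 0 1 1 0]"
definition "Cs = [M2 1 1 0 0, M2 0 (-1) 0 1, M2 0 1 1 0, M2 1 0 0 1, M2 (-1) 0 1 0, M2 0 1 0 0, M2 1 0 0 0]"

lemma U_decomp: "U = (\<Sum>j<7. tensor3 (As!j) (Bs!j) (Cs!j))"
proof (rule vec_eq_iff[THEN iffD2], rule allI, rule vec_eq_iff[THEN iffD2], rule allI)
  fix i j :: "2\<times>2\<times>2"
  obtain p q r where i: "i = (p,q,r)" by (metis prod_cases3)
  obtain a b c where j: "j = (a,b,c)" by (metis prod_cases3)
  show "U $ i $ j = (\<Sum>j<7. tensor3 (As!j) (Bs!j) (Cs!j)) $ i $ j"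
    unfolding i j sum_component U_ent
    using ex2[of p] ex2[of q] ex2[of r] ex2[of a] ex2[of b] ex2[of c]
    by (auto simp: eval_nat_numeral As_def Bs_def Cs_def t2 t3)
qed


definition vec22 :: "complex \<Rightarrow> complex \<Rightarrow> complex \<Rightarrow> complex \<Rightarrow> complex^(2\<times>2)" where
  "vec22 a b c d = (\<chi> i. if i = (0,0) then a else if i = (0,1) then b else if i = (1,0) then c else d)"
lemma vec22_ent[simp]: "vec22 a b c d $ (0,0) = a" "vec22 a b c d $ (0,1) = b"
  "vec22 a b c d $ (1,0) = c" "vec22 a b c d $ (1,1) = d"
  by (simp_all add: vec22_def)

lemma vec22_eq: fixes x :: "complex^(2\<times>2)"
  shows "x = vec22 (x$(0,0)) (x$(0,1)) (x$(1,0)) (x$(1,1))"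
proof (rule vec_eq_iff[THEN iffD2], rule allI)
  fix i :: "2\<times>2" show "x $ i = vec22 (x$(0,0)) (x$(0,1)) (x$(1,0)) (x$(1,1)) $ i"
    using cases22[of i] by auto
qed

lemma vec22_smult: "c *s vec22 a b d e = vec22 (c*a) (c*b) (c*d) (c*e)"
  by (simp add: vec22_def vec_eq_iff)

lemma dep_of_K:
  fixes x y K :: "complex^(2\<times>2)"
  assumes "x = a *s K" "y = b *s K"
  shows "\<exists>s t. (s \<noteq> 0 \<or> t \<noteq> 0) \<and> s *s x + t *s y = 0"
proof (cases "a = 0 \<and> b = 0")
  case True
  then show ?thesis using assms by (intro exI[of _ 1] exI[of _ 0]) simp
next
  case False
  then show ?thesis using assms
    by (intro exI[of _ b] exI[of _ "-a"]) (auto simp: vec_eq_iff)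
qed

definition keq :: "complex^(2\<times>2) \<Rightarrow> complex \<Rightarrow> complex \<Rightarrow> complex \<Rightarrow> complex \<Rightarrow> bool" where
  "keq z p0 p1 n0 n1 \<longleftrightarrow> z$(0,0)*p0 + z$(0,1)*p1 = 0 \<and> z$(1,1)*p0 + z$(1,0)*p1 = 0 \<and>
     n0*z$(0,0) + n1*z$(1,1) = 0 \<and> n0*z$(0,1) + n1*z$(1,0) = 0"

lemma solve1:
  fixes z :: "complex^(2\<times>2)"
  assumes "keq z p0 p1 n0 n1" "p1 \<noteq> 0" "n0 \<noteq> 0"
  shows "z = z$(1,1) *s vec22 (-n1/n0) (n1*p0/(n0*p1)) (-p0/p1) 1"
proof -
  have e: "z$(0,0)*p0 + z$(0,1)*p1 = 0" "z$(1,1)*p0 + z$(1,0)*p1 = 0"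
     "n0*z$(0,0) + n1*z$(1,1) = 0" "n0*z$(0,1) + n1*z$(1,0) = 0" using assms(1) by (simp_all add: keq_def)
  have a: "z$(0,0) = -n1*z$(1,1)/n0" using e(3) assms by (simp add: field_simps add_eq_0_iff)
  have b: "z$(1,0) = -p0*z$(1,1)/p1" using e(2) assms by (simp add: field_simps add_eq_0_iff)
  have c: "z$(0,1) = -p0*z$(0,0)/p1" using e(1) assms by (simp add: field_simps add_eq_0_iff)
  show ?thesis
  proof -
    have c'': "z$(0,1) = - p0 * (- n1 * z$(1,1) / n0) / p1" using a c by simp
    have c': "z$(0,1) = n1 * (p0 * z$(1,1)) / (n0 * p1)" unfolding c'' using assms(2,3) by (simp add: field_simps)
    have a': "z$(0,0) = - (n1 * z$(1,1) / n0)" using a by simp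
    have b': "z$(1,0) = - (p0 * z$(1,1) / p1)" using b by simp
    have "z = vec22 (z$(0,0)) (z$(0,1)) (z$(1,0)) (z$(1,1))" by (rule vec22_eq)
    also have "\<dots> = vec22 (- (n1 * z$(1,1) / n0)) (n1 * (p0 * z$(1,1)) / (n0 * p1)) (- (p0 * z$(1,1) / p1)) (z$(1,1))"
      by (simp only: a' b' c')
    finally show ?thesis by (simp add: vec22_smult mult_ac)
  qed
qed

lemma solve2:
  fixes z :: "complex^(2\<times>2)"
  assumes "keq z p0 p1 n0 n1" "p1 \<noteq> 0" "n1 \<noteq> 0"
  shows "z = z$(0,0) *s vec22 1 (-p0/p1) (n0*p0/(n1*p1)) (-n0/n1)"
proof -
  have e: "z$(0,0)*p0 + z$(0,1)*p1 = 0" "z$(1,1)*p0 + z$(1,0)*p1 = 0"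
     "n0*z$(0,0) + n1*z$(1,1) = 0" "n0*z$(0,1) + n1*z$(1,0) = 0" using assms(1) by (simp_all add: keq_def)
  have a: "z$(1,1) = -n0*z$(0,0)/n1" using e(3) assms by (simp add: field_simps add_eq_0_iff)
  have b: "z$(0,1) = -p0*z$(0,0)/p1" using e(1) assms by (simp add: field_simps add_eq_0_iff)
  have c: "z$(1,0) = -p0*z$(1,1)/p1" using e(2) assms by (simp add: field_simps add_eq_0_iff)
  have c'': "z$(1,0) = - p0 * (-n0*z$(0,0)/n1) / p1" using a c by simp
  have c': "z$(1,0) = z$(0,0) * (n0*p0/(n1*p1))" unfolding c'' using assms(2,3) by (simp add: field_simps)
  have a': "z$(1,1) = z$(0,0) * (-n0/n1)" using a by simp
  have b': "z$(0,1) = z$(0,0) * (-p0/p1)" using b by simp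
  have "z = vec22 (z$(0,0)) (z$(0,1)) (z$(1,0)) (z$(1,1))" by (rule vec22_eq)
  also have "\<dots> = vec22 (z$(0,0)) (z$(0,0) * (-p0/p1)) (z$(0,0) * (n0*p0/(n1*p1))) (z$(0,0) * (-n0/n1))"
    by (simp only: a' b' c')
  finally show ?thesis by (simp add: vec22_smult mult_ac)
qed

lemma solve3:
  fixes z :: "complex^(2\<times>2)"
  assumes "keq z p0 p1 n0 n1" "p0 \<noteq> 0" "n0 \<noteq> 0"
  shows "z = z$(1,0) *s vec22 (n1*p1/(n0*p0)) (-n1/n0) 1 (-p1/p0)"
proof -
  have e: "z$(0,0)*p0 + z$(0,1)*p1 = 0" "z$(1,1)*p0 + z$(1,0)*p1 = 0"
     "n0*z$(0,0) + n1*z$(1,1) = 0" "n0*z$(0,1) + n1*z$(1,0) = 0" using assms(1) by (simp_all add: keq_def)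
  have a: "z$(0,1) = -n1*z$(1,0)/n0" using e(4) assms by (simp add: field_simps add_eq_0_iff)
  have b: "z$(1,1) = -p1*z$(1,0)/p0" using e(2) assms by (simp add: field_simps add_eq_0_iff)
  have c: "z$(0,0) = -p1*z$(0,1)/p0" using e(1) assms by (simp add: field_simps add_eq_0_iff)
  have c'': "z$(0,0) = - p1 * (-n1*z$(1,0)/n0) / p0" using a c by simp
  have c': "z$(0,0) = z$(1,0) * (n1*p1/(n0*p0))" unfolding c'' using assms(2,3) by (simp add: field_simps)
  have a': "z$(0,1) = z$(1,0) * (-n1/n0)" using a by simp
  have b': "z$(1,1) = z$(1,0) * (-p1/p0)" using b by simp
  have "z = vec22 (z$(0,0)) (z$(0,1)) (z$(1,0)) (z$(1,1))" by (rule vec22_eq)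
  also have "\<dots> = vec22 (z$(1,0) * (n1*p1/(n0*p0))) (z$(1,0) * (-n1/n0)) (z$(1,0)) (z$(1,0) * (-p1/p0))"
    by (simp only: a' b' c')
  finally show ?thesis by (simp add: vec22_smult mult_ac)
qed

lemma solve4:
  fixes z :: "complex^(2\<times>2)"
  assumes "keq z p0 p1 n0 n1" "p0 \<noteq> 0" "n1 \<noteq> 0"
  shows "z = z$(0,1) *s vec22 (-p1/p0) 1 (-n0/n1) (n0*p1/(n1*p0))"
proof -
  have e: "z$(0,0)*p0 + z$(0,1)*p1 = 0" "z$(1,1)*p0 + z$(1,0)*p1 = 0"
     "n0*z$(0,0) + n1*z$(1,1) = 0" "n0*z$(0,1) + n1*z$(1,0) = 0" using assms(1) by (simp_all add: keq_def)
  have a: "z$(1,0) = -n0*z$(0,1)/n1" using e(4) assms by (simp add: field_simps add_eq_0_iff)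
  have b: "z$(0,0) = -p1*z$(0,1)/p0" using e(1) assms by (simp add: field_simps add_eq_0_iff)
  have c: "z$(1,1) = -p1*z$(1,0)/p0" using e(2) assms by (simp add: field_simps add_eq_0_iff)
  have c'': "z$(1,1) = - p1 * (-n0*z$(0,1)/n1) / p0" using a c by simp
  have c': "z$(1,1) = z$(0,1) * (n0*p1/(n1*p0))" unfolding c'' using assms(2,3) by (simp add: field_simps)
  have a': "z$(1,0) = z$(0,1) * (-n0/n1)" using a by simp
  have b': "z$(0,0) = z$(0,1) * (-p1/p0)" using b by simp
  have "z = vec22 (z$(0,0)) (z$(0,1)) (z$(1,0)) (z$(1,1))" by (rule vec22_eq)
  also have "\<dots> = vec22 (z$(0,1) * (-p1/p0)) (z$(0,1)) (z$(0,1) * (-n0/n1)) (z$(0,1) * (n0*p1/(n1*p0)))"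
    by (simp only: a' b' c')
  finally show ?thesis by (simp add: vec22_smult mult_ac)
qed

lemma rank1_dep:
  fixes x y :: "complex^(2\<times>2)"
  assumes "keq x p0 p1 n0 n1" "keq y p0 p1 n0 n1" "p0 \<noteq> 0 \<or> p1 \<noteq> 0" "n0 \<noteq> 0 \<or> n1 \<noteq> 0"
  shows "\<exists>s t. (s \<noteq> 0 \<or> t \<noteq> 0) \<and> s *s x + t *s y = 0"
proof -
  consider "p1 \<noteq> 0" "n0 \<noteq> 0" | "p1 \<noteq> 0" "n1 \<noteq> 0" | "p0 \<noteq> 0" "n0 \<noteq> 0" | "p0 \<noteq> 0" "n1 \<noteq> 0"
    using assms(3,4) by blast
  then show ?thesis
  proof cases
    case 1 then show ?thesis using solve1[OF assms(1)] solve1[OF assms(2)] by (intro dep_of_K) auto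
  next
    case 2 then show ?thesis using solve2[OF assms(1)] solve2[OF assms(2)] by (intro dep_of_K) auto
  next
    case 3 then show ?thesis using solve3[OF assms(1)] solve3[OF assms(2)] by (intro dep_of_K) auto
  next
    case 4 then show ?thesis using solve4[OF assms(1)] solve4[OF assms(2)] by (intro dep_of_K) auto
  qed
qed

definition Sl :: "complex^(2\<times>2) \<Rightarrow> 2 \<Rightarrow> 2 \<Rightarrow> 2 \<Rightarrow> 2 \<Rightarrow> complex" where
  "Sl l q b r c = (if r = b + c then l$(q+b, q+b+c) else 0)"

definition rz :: "complex^(2\<times>2) \<Rightarrow> complex^(2\<times>2) \<Rightarrow> bool" where
  "rz l w \<longleftrightarrow> (\<forall>q b. (\<Sum>x\<in>UNIV. Sl l q b (fst x) (snd x) * w$x) = 0)"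
definition lz :: "complex^(2\<times>2) \<Rightarrow> complex^(2\<times>2) \<Rightarrow> bool" where
  "lz l v \<longleftrightarrow> (\<forall>r c. (\<Sum>x\<in>UNIV. v$x * Sl l (fst x) (snd x) r c) = 0)"

lemma rz_eqs:
  fixes l w :: "complex^(2\<times>2)"
  assumes "rz l w"
  shows "l$(0,0) * w$(0,0) + l$(0,1) * w$(1,1) = 0" "l$(1,1) * w$(0,0) + l$(1,0) * w$(1,1) = 0"
    "l$(0,0) * w$(1,0) + l$(0,1) * w$(0,1) = 0" "l$(1,1) * w$(1,0) + l$(1,0) * w$(0,1) = 0"
proof -
  have h: "(\<Sum>x\<in>UNIV. Sl l q b (fst x) (snd x) * w$x) = 0" for q b using assms by (simp add: rz_def)
  show "l$(0,0) * w$(0,0) + l$(0,1) * w$(1,1) = 0" using h[of 0 0] by (simp add: sum22 Sl_def t2 add.commute)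
  show "l$(1,1) * w$(0,0) + l$(1,0) * w$(1,1) = 0" using h[of 1 0] by (simp add: sum22 Sl_def t2 add.commute)
  show "l$(0,0) * w$(1,0) + l$(0,1) * w$(0,1) = 0" using h[of 1 1] by (simp add: sum22 Sl_def t2 add.commute)
  show "l$(1,1) * w$(1,0) + l$(1,0) * w$(0,1) = 0" using h[of 0 1] by (simp add: sum22 Sl_def t2 add.commute)
qed

lemma lz_eqs:
  fixes l v :: "complex^(2\<times>2)"
  assumes "lz l v"
  shows "v$(0,0) * l$(0,0) + v$(1,0) * l$(1,1) = 0" "v$(0,0) * l$(0,1) + v$(1,0) * l$(1,0) = 0"
    "v$(1,1) * l$(0,0) + v$(0,1) * l$(1,1) = 0" "v$(1,1) * l$(0,1) + v$(0,1) * l$(1,0) = 0"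
proof -
  have h: "(\<Sum>x\<in>UNIV. v$x * Sl l (fst x) (snd x) r c) = 0" for r c using assms by (simp add: lz_def)
  show "v$(0,0) * l$(0,0) + v$(1,0) * l$(1,1) = 0" using h[of 0 0] by (simp add: sum22 Sl_def t2 add.commute)
  show "v$(0,0) * l$(0,1) + v$(1,0) * l$(1,0) = 0" using h[of 1 1] by (simp add: sum22 Sl_def t2 add.commute)
  show "v$(1,1) * l$(0,0) + v$(0,1) * l$(1,1) = 0" using h[of 1 0] by (simp add: sum22 Sl_def t2 add.commute)
  show "v$(1,1) * l$(0,1) + v$(0,1) * l$(1,0) = 0" using h[of 0 1] by (simp add: sum22 Sl_def t2 add.commute)
qed

lemma rz_detp: fixes l w :: "complex^(2\<times>2)" assumes "w \<noteq> 0" "rz l w" shows "detp l = 0"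
  using rz_eqs[OF assms(2)] by (intro detp_zero[OF assms(1)]) (simp_all add: mult_ac)

lemma nz22: fixes w :: "complex^(2\<times>2)" assumes "w \<noteq> 0"
  shows "w$(0,0) \<noteq> 0 \<or> w$(1,1) \<noteq> 0 \<or> w$(1,0) \<noteq> 0 \<or> w$(0,1) \<noteq> 0"
proof -
  obtain i where i: "w$i \<noteq> 0" using assms by (auto simp: vec_eq_iff)
  show ?thesis using cases22[of i] i by auto
qed

lemma pencil:
  fixes x y w v :: "complex^(2\<times>2)"
  assumes "w \<noteq> 0" "v \<noteq> 0" "rz x w" "rz y w" "lz x v" "lz y v"
  shows "\<exists>s t. (s \<noteq> 0 \<or> t \<noteq> 0) \<and> s *s x + t *s y = 0"
proof -
  obtain p0 p1 where p: "p0 \<noteq> 0 \<or> p1 \<noteq> 0"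
    and pr: "\<And>z. rz z w \<Longrightarrow> z$(0,0) * p0 + z$(0,1) * p1 = 0 \<and> z$(1,1) * p0 + z$(1,0) * p1 = 0"
  proof (cases "w$(0,0) \<noteq> 0 \<or> w$(1,1) \<noteq> 0")
    case True
    show ?thesis by (rule that[of "w$(0,0)" "w$(1,1)"]) (use True rz_eqs in auto)
  next
    case False
    then have "w$(1,0) \<noteq> 0 \<or> w$(0,1) \<noteq> 0" using nz22[OF assms(1)] by auto
    show ?thesis by (rule that[of "w$(1,0)" "w$(0,1)"]) (use \<open>w$(1,0) \<noteq> 0 \<or> w$(0,1) \<noteq> 0\<close> rz_eqs in auto)
  qed
  obtain n0 n1 where n: "n0 \<noteq> 0 \<or> n1 \<noteq> 0"
    and nr: "\<And>z. lz z v \<Longrightarrow> n0 * z$(0,0) + n1 * z$(1,1) = 0 \<and> n0 * z$(0,1) + n1 * z$(1,0) = 0"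
  proof (cases "v$(0,0) \<noteq> 0 \<or> v$(1,0) \<noteq> 0")
    case True
    show ?thesis by (rule that[of "v$(0,0)" "v$(1,0)"]) (use True lz_eqs in auto)
  next
    case False
    then have "v$(1,1) \<noteq> 0 \<or> v$(0,1) \<noteq> 0" using nz22[OF assms(2)] by auto
    show ?thesis by (rule that[of "v$(1,1)" "v$(0,1)"]) (use \<open>v$(1,1) \<noteq> 0 \<or> v$(0,1) \<noteq> 0\<close> lz_eqs in auto)
  qed
  have "keq x p0 p1 n0 n1" "keq y p0 p1 n0 n1"
    using pr[OF assms(3)] pr[OF assms(4)] nr[OF assms(5)] nr[OF assms(6)] by (simp_all add: keq_def)
  then show ?thesis using rank1_dep p n by blast
qed


lemma orth3:
  fixes x1 x2 x3 :: "complex^(2\<times>2)"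
  shows "\<exists>w. w \<noteq> 0 \<and> dot x1 w = 0 \<and> dot x2 w = 0 \<and> dot x3 w = 0"
proof -
  define M :: "complex^(2\<times>2)^(2\<times>2)" where
    "M = (\<chi> i. if i = (0,0) then x1 else if i = (0,1) then x2 else x3)"
  have "row (1,0) M = row (1,1) M" by (simp add: M_def row_def)
  then have "det M = 0" by (intro det_identical_rows[of "(1,0)" "(1,1)"]) auto
  then have "\<not> invertible M" using invertible_det_nz by blast
  then obtain w where w: "M *v w = 0" "w \<noteq> 0"
    unfolding invertible_left_inverse matrix_left_invertible_ker by blast
  have "dot (M$i) w = 0" for i
  proof -
    have "(M *v w)$i = 0" using w(1) by simp
    then show ?thesis by (simp add: matrix_vector_mult_def dot_def)
  qed
  from this[of "(0,0)"] this[of "(0,1)"] this[of "(1,0)"] show ?thesis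
    using w(2) by (auto simp: M_def)
qed

lemma comb4:
  fixes d :: "2\<times>2 \<Rightarrow> complex"
  shows "(\<exists>i j. i \<noteq> j \<and> d i = 0 \<and> d j = 0) \<or>
         (\<exists>i j k l. distinct [i,j,k,l] \<and> UNIV = {i,j,k,l} \<and> d i \<noteq> 0 \<and> d j \<noteq> 0 \<and> d k \<noteq> 0)"
proof -
  have D: "distinct [(0,0),(0,1),(1,0),(1,1::2)::2\<times>2]" by simp
  have U: "(UNIV::(2\<times>2) set) = {(0,0),(0,1),(1,0),(1,1)}" by (rule UNIV22)
  consider "d (0,0) = 0 \<and> d (0,1) = 0" | "d (0,0) = 0 \<and> d (1,0) = 0" | "d (0,0) = 0 \<and> d (1,1) = 0"
    | "d (0,1) = 0 \<and> d (1,0) = 0" | "d (0,1) = 0 \<and> d (1,1) = 0" | "d (1,0) = 0 \<and> d (1,1) = 0"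
    | "d (0,1) \<noteq> 0 \<and> d (1,0) \<noteq> 0 \<and> d (1,1) \<noteq> 0"
    | "d (0,0) \<noteq> 0 \<and> d (1,0) \<noteq> 0 \<and> d (1,1) \<noteq> 0"
    | "d (0,0) \<noteq> 0 \<and> d (0,1) \<noteq> 0 \<and> d (1,1) \<noteq> 0"
    | "d (0,0) \<noteq> 0 \<and> d (0,1) \<noteq> 0 \<and> d (1,0) \<noteq> 0" by blast
  then show ?thesis
  proof cases
    case 1 then show ?thesis by (intro disjI1 exI[of _ "(0,0)"] exI[of _ "(0,1)"]) simp
  next
    case 2 then show ?thesis by (intro disjI1 exI[of _ "(0,0)"] exI[of _ "(1,0)"]) simp
  next
    case 3 then show ?thesis by (intro disjI1 exI[of _ "(0,0)"] exI[of _ "(1,1)"]) simp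
  next
    case 4 then show ?thesis by (intro disjI1 exI[of _ "(0,1)"] exI[of _ "(1,0)"]) simp
  next
    case 5 then show ?thesis by (intro disjI1 exI[of _ "(0,1)"] exI[of _ "(1,1)"]) simp
  next
    case 6 then show ?thesis by (intro disjI1 exI[of _ "(1,0)"] exI[of _ "(1,1)"]) simp
  next
    case 7 then show ?thesis
      by (intro disjI2 exI[of _ "(0,1)"] exI[of _ "(1,0)"] exI[of _ "(1,1)"] exI[of _ "(0,0)"]) (auto simp: U)
  next
    case 8 then show ?thesis
      by (intro disjI2 exI[of _ "(0,0)"] exI[of _ "(1,0)"] exI[of _ "(1,1)"] exI[of _ "(0,1)"]) (auto simp: U)
  next
    case 9 then show ?thesis
      by (intro disjI2 exI[of _ "(0,0)"] exI[of _ "(0,1)"] exI[of _ "(1,1)"] exI[of _ "(1,0)"]) (auto simp: U)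
  next
    case 10 then show ?thesis
      by (intro disjI2 exI[of _ "(0,0)"] exI[of _ "(0,1)"] exI[of _ "(1,0)"] exI[of _ "(1,1)"]) (auto simp: U)
  qed
qed

lemma gram_contra:
  fixes A B :: "complex^(2\<times>2)^(2\<times>2)"
  assumes AB: "A ** B = mat 1" and dist: "distinct [i,j,k,l]" and U: "UNIV = {i,j,k,l}"
    and Z: "\<And>m n. m \<in> {i,j,k} \<Longrightarrow> n \<in> {i,j,k} \<Longrightarrow> Bf (column m B) (column n B) = 0"
  shows False
proof -
  define G where "G = transpose B ** Jm ** B"
  have Gz: "G$m$n = 0" if "m \<in> {i,j,k}" "n \<in> {i,j,k}" for m n
    using Z[OF that] by (simp add: G_def gram_ent)
  have BA: "B ** A = mat 1" using AB matrix_left_right_inverse by blast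
  have tAB: "transpose A ** transpose B = mat 1"
    using BA by (metis matrix_transpose_mul transpose_mat)
  have PG: "(A ** Jm ** transpose A) ** G = mat 1"
  proof -
    have "(A ** Jm ** transpose A) ** G = A ** Jm ** (transpose A ** transpose B) ** Jm ** B"
      by (simp add: G_def matrix_mul_assoc)
    also have "\<dots> = A ** (Jm ** Jm) ** B" by (simp add: tAB matrix_mul_assoc)
    also have "\<dots> = mat 1" by (simp add: JJ AB)
    finally show ?thesis .
  qed
  define x :: "complex^(2\<times>2)" where
    "x = (if G$l$i = 0 \<and> G$l$j = 0 then (\<chi> n. if n = i then 1 else 0)
          else (\<chi> n. if n = i then G$l$j else if n = j then - G$l$i else 0))"
  have ij: "i \<noteq> j" using dist by auto
  have x0: "x \<noteq> 0"
  proof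
    assume "x = 0"
    then have "x$i = 0" "x$j = 0" by simp_all
    then show False using ij by (auto simp: x_def split: if_splits)
  qed
  have xs: "x$n = 0" if "n \<noteq> i" "n \<noteq> j" for n using that by (simp add: x_def)
  have Gx: "(G *v x)$m = G$m$i * x$i + G$m$j * x$j" for m
  proof -
    have "(G *v x)$m = (\<Sum>n\<in>UNIV. G$m$n * x$n)" by (simp add: matrix_vector_mult_def)
    also have "\<dots> = (\<Sum>n\<in>{i,j}. G$m$n * x$n)"
      by (rule sum.mono_neutral_right) (auto simp: xs)
    also have "\<dots> = G$m$i * x$i + G$m$j * x$j" using ij by simp
    finally show ?thesis .
  qed
  have "G *v x = 0"
  proof (rule vec_eq_iff[THEN iffD2], rule allI)
    fix m
    have "m \<in> {i,j,k,l}" using U by blast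
    then show "(G *v x)$m = 0$m"
    proof (elim insertE)
      assume "m = l"
      then show ?thesis unfolding Gx using ij by (auto simp: x_def)
    qed (auto simp: Gx Gz)
  qed
  then have "x = 0"
    by (metis PG matrix_vector_mul_assoc matrix_vector_mul_lid matrix_vector_mult_0_right)
  then show False using x0 by simp
qed


lemma dot_comm: "dot x y = dot y x" by (simp add: dot_def mult.commute)

definition enc :: "2\<times>2\<times>2 \<Rightarrow> nat" where
  "enc i = (if i = (0,0,0) then 0 else if i = (0,0,1) then 1 else if i = (0,1,0) then 2
     else if i = (0,1,1) then 3 else if i = (1,0,0) then 4 else 5)"

lemma enc_range: "enc ` UNIV = {..<6}"
proof
  show "enc ` UNIV \<subseteq> {..<6}" by (auto simp: enc_def)
  show "{..<6} \<subseteq> enc ` UNIV"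
  proof
    fix j :: nat assume "j \<in> {..<6}"
    then have "j = 0 \<or> j = 1 \<or> j = 2 \<or> j = 3 \<or> j = 4 \<or> j = 5" by auto
    then show "j \<in> enc ` UNIV"
    proof (elim disjE)
      assume "j = 0" then show ?thesis by (intro image_eqI[of _ _ "(0,0,0)"]) (auto simp: enc_def)
    next
      assume "j = 1" then show ?thesis by (intro image_eqI[of _ _ "(0,0,1)"]) (auto simp: enc_def)
    next
      assume "j = 2" then show ?thesis by (intro image_eqI[of _ _ "(0,1,0)"]) (auto simp: enc_def)
    next
      assume "j = 3" then show ?thesis by (intro image_eqI[of _ _ "(0,1,1)"]) (auto simp: enc_def)
    next
      assume "j = 4" then show ?thesis by (intro image_eqI[of _ _ "(1,0,0)"]) (auto simp: enc_def)
    next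
      assume "j = 5" then show ?thesis by (intro image_eqI[of _ _ "(1,1,1)"]) (auto simp: enc_def)
    qed
  qed
qed

lemma basis_extract:
  fixes aa :: "nat \<Rightarrow> complex^(2\<times>2)"
  assumes nd: "\<And>l. (\<forall>j<6. dot l (aa j) = 0) \<Longrightarrow> l = 0"
  shows "\<exists>(\<iota> :: 2\<times>2 \<Rightarrow> nat) (e1::nat) (e2::nat) (A :: complex^(2\<times>2)^(2\<times>2)) B.
    (\<forall>k. \<iota> k < 6) \<and> e1 \<noteq> e2 \<and>
    (\<forall>j<6. (\<exists>k. j = \<iota> k) \<or> j = e1 \<or> j = e2) \<and>
    A ** B = mat 1 \<and>
    (\<forall>k m. dot (column m B) (aa (\<iota> k)) = (if k = m then 1 else 0))"
proof -
  define M :: "complex^(2\<times>2)^(2\<times>2\<times>2)" where "M = (\<chi> i. aa (enc i))"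
  have rM: "row i M = aa (enc i)" for i unfolding M_def row_def by (simp add: vec_lambda_eta)
  have "rows M = (\<lambda>i. aa (enc i)) ` UNIV" unfolding rows_def rM by auto
  also have "\<dots> = aa ` (enc ` UNIV)" by (simp add: image_image)
  finally have rowsM: "rows M = aa ` {..<6}" using enc_range by simp
  have "M *v x = 0 \<longrightarrow> x = 0" for x
  proof
    assume h: "M *v x = 0"
    have "dot x (aa j) = 0" if "j < 6" for j
    proof -
      obtain i where "j = enc i" using enc_range \<open>j < 6\<close> by (metis imageE lessThan_iff)
      moreover have "(M *v x)$i = 0" using h by simp
      ultimately show ?thesis by (simp add: matrix_vector_mult_def M_def dot_def mult.commute)
    qed
    then show "x = 0" using nd by blast
  qed
  then have "vec.span (rows M) = UNIV"
    using matrix_left_invertible_ker matrix_left_invertible_span_rows_gen by blast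
  then have spanU: "vec.span (aa ` {..<6}) = UNIV" by (simp add: rowsM)
  obtain B0 where B0: "B0 \<subseteq> aa ` {..<6}" "vec.independent B0" "aa ` {..<6} \<subseteq> vec.span B0"
    by (rule vec.maximal_independent_subset)
  have "vec.span (aa ` {..<6}) \<subseteq> vec.span B0"
    using B0(3) by (intro vec.span_minimal) auto
  then have UB0: "UNIV \<subseteq> vec.span B0" using spanU by simp
  have cB0: "card B0 = 4"
    using vec.basis_card_eq_dim[of B0 UNIV] UB0 B0(2) vec_dim_card[where 'a=complex and 'n="2\<times>2"] by simp
  obtain J where J: "J \<subseteq> {..<6}" "inj_on aa J" "B0 = aa ` J"
    using B0(1) subset_image_inj by metis
  have fJ: "finite J" using J(1) finite_subset by blast
  have cJ: "card J = 4" using cB0 J card_image by metis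
  obtain \<iota> where \<iota>: "bij_betw \<iota> (UNIV::(2\<times>2) set) J"
    using finite_same_card_bij[of "UNIV::(2\<times>2) set" J] fJ cJ by auto
  have h_bij: "bij_betw (aa \<circ> \<iota>) UNIV B0"
    using bij_betw_trans[OF \<iota>, of aa B0] J(2,3) by (simp add: bij_betw_def)
  define A :: "complex^(2\<times>2)^(2\<times>2)" where "A = (\<chi> k. aa (\<iota> k))"
  have "\<exists>B. A ** B = mat 1"
    unfolding matrix_right_invertible_independent_rows
  proof (intro allI impI)
    fix c :: "2\<times>2 \<Rightarrow> complex" and k
    assume hc: "(\<Sum>i\<in>UNIV. c i *s row i A) = 0"
    define c' where "c' = c \<circ> the_inv_into UNIV (aa \<circ> \<iota>)"
    have inj: "inj (aa \<circ> \<iota>)" using h_bij bij_betw_imp_inj_on by blast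
    have c'h: "c' (aa (\<iota> i)) = c i" for i
      unfolding c'_def using the_inv_into_f_f[OF inj, of i] by simp
    have "(\<Sum>v\<in>B0. c' v *s v) = (\<Sum>i\<in>UNIV. c' ((aa \<circ> \<iota>) i) *s (aa \<circ> \<iota>) i)"
      by (rule sum.reindex_bij_betw[OF h_bij, symmetric])
    also have "\<dots> = (\<Sum>i\<in>UNIV. c i *s row i A)" by (simp add: c'h A_def row_def vec_lambda_eta)
    finally have "(\<Sum>v\<in>B0. c' v *s v) = 0" using hc by simp
    then have "\<forall>v\<in>B0. c' v = 0" using B0(2) vec.independent_explicit by blast
    moreover have "aa (\<iota> k) \<in> B0" using h_bij bij_betwE by fastforce
    ultimately show "c k = 0" using c'h by metis
  qed
  then obtain B where AB: "A ** B = mat 1" by blast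
  have cD: "card ({..<6} - J) = 2" using J(1) cJ by (simp add: card_Diff_subset fJ)
  obtain e1 e2 where E: "{..<6} - J = {e1,e2}" "e1 \<noteq> e2" using cD card_2_iff by metis
  have F1: "\<forall>k. \<iota> k < 6" using \<iota> J(1) bij_betwE by blast
  have F3: "\<forall>j<6. (\<exists>k. j = \<iota> k) \<or> j = e1 \<or> j = e2"
  proof (intro allI impI)
    fix j :: nat assume "j < 6"
    show "(\<exists>k. j = \<iota> k) \<or> j = e1 \<or> j = e2"
    proof (cases "j \<in> J")
      case True then show ?thesis using \<iota> by (metis bij_betw_iff_bijections)
    next
      case False then show ?thesis using E(1) \<open>j < 6\<close> by blast
    qed
  qed
  have F5: "\<forall>k m. dot (column m B) (aa (\<iota> k)) = (if k = m then 1 else 0)"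
  proof (intro allI)
    fix k m
    have "(A ** B)$k$m = dot (aa (\<iota> k)) (column m B)"
      by (simp add: matrix_matrix_mult_def A_def dot_def column_def)
    then show "dot (column m B) (aa (\<iota> k)) = (if k = m then 1 else 0)" using AB by (simp add: dot_comm mat_def)
  qed
  show ?thesis by (intro exI[of _ \<iota>] exI[of _ e1] exI[of _ e2] exI[of _ A] exI[of _ B] conjI F1 E(2) F3 AB F5)
qed


lemma slice_right:
  fixes aa bb cc :: "nat \<Rightarrow> complex^(2\<times>2)" and l w :: "complex^(2\<times>2)"
  assumes H: "\<And>l q b r c. Sl l q b r c = (\<Sum>j<6. dot l (aa j) * bb j $ (q,b) * cc j $ (r,c))"
    and Z: "\<forall>j<6. dot l (aa j) = 0 \<or> dot (cc j) w = 0"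
  shows "rz l w"
  unfolding rz_def
proof (intro allI)
  fix q b
  have "(\<Sum>x\<in>UNIV. Sl l q b (fst x) (snd x) * w$x)
      = (\<Sum>x\<in>UNIV. \<Sum>j<6. dot l (aa j) * bb j $ (q,b) * cc j $ x * w$x)"
    by (simp add: H sum_distrib_right)
  also have "\<dots> = (\<Sum>j<6. \<Sum>x\<in>UNIV. dot l (aa j) * bb j $ (q,b) * cc j $ x * w$x)"
    by (rule sum.swap)
  also have "\<dots> = (\<Sum>j<6. dot l (aa j) * bb j $ (q,b) * dot (cc j) w)"
    by (simp add: dot_def sum_distrib_left mult.assoc)
  also have "\<dots> = 0" using Z by (intro sum.neutral) auto
  finally show "(\<Sum>x\<in>UNIV. Sl l q b (fst x) (snd x) * w$x) = 0" .
qed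

lemma aux_left: "(\<Sum>x\<in>UNIV. v$x * (D * b$x * C)) = D * C * dot b v"
  by (simp add: dot_def sum_distrib_left mult_ac)

lemma slice_left:
  fixes aa bb cc :: "nat \<Rightarrow> complex^(2\<times>2)" and l v :: "complex^(2\<times>2)"
  assumes H: "\<And>l q b r c. Sl l q b r c = (\<Sum>j<6. dot l (aa j) * bb j $ (q,b) * cc j $ (r,c))"
    and Z: "\<forall>j<6. dot l (aa j) = 0 \<or> dot (bb j) v = 0"
  shows "lz l v"
  unfolding lz_def
proof (intro allI)
  fix r c
  have "(\<Sum>x\<in>UNIV. v$x * Sl l (fst x) (snd x) r c)
      = (\<Sum>x\<in>UNIV. \<Sum>j<6. v$x * (dot l (aa j) * bb j $ x * cc j $ (r,c)))"
    by (simp add: H sum_distrib_left)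
  also have "\<dots> = (\<Sum>j<6. \<Sum>x\<in>UNIV. v$x * (dot l (aa j) * bb j $ x * cc j $ (r,c)))"
    by (rule sum.swap)
  also have "\<dots> = (\<Sum>j<6. dot l (aa j) * cc j $ (r,c) * dot (bb j) v)"
    by (rule sum.cong[OF refl], rule aux_left)
  also have "\<dots> = 0" using Z by (intro sum.neutral) auto
  finally show "(\<Sum>x\<in>UNIV. v$x * Sl l (fst x) (snd x) r c) = 0" .
qed

lemma xx2: "(x::2) + x = 0" using ex2[of x] by auto

lemma core:
  fixes aa bb cc :: "nat \<Rightarrow> complex^(2\<times>2)"
  assumes H: "\<And>l q b r c. Sl l q b r c = (\<Sum>j<6. dot l (aa j) * bb j $ (q,b) * cc j $ (r,c))"
  shows False
proof -
  have nd: "l = 0" if "\<forall>j<6. dot l (aa j) = 0" for l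
  proof (rule vec_eq_iff[THEN iffD2], rule allI)
    fix i :: "2\<times>2"
    obtain x y where i: "i = (x,y)" by fastforce
    have "Sl l x 0 (x+y) (x+y) = l$(x,y)" by (simp add: Sl_def add.assoc[symmetric] xx2)
    moreover have "Sl l x 0 (x+y) (x+y) = 0" using H that by simp
    ultimately show "l$i = 0$i" using i by simp
  qed
  obtain \<iota> :: "2\<times>2 \<Rightarrow> nat" and e1 e2 :: nat and A B :: "complex^(2\<times>2)^(2\<times>2)" where
    all: "(\<forall>k. \<iota> k < 6) \<and> e1 \<noteq> e2 \<and>
    (\<forall>j<6. (\<exists>k. j = \<iota> k) \<or> j = e1 \<or> j = e2) \<and>
    A ** B = mat 1 \<and>
    (\<forall>k m. dot (column m B) (aa (\<iota> k)) = (if k = m then 1 else 0))"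
    using basis_extract[of aa, OF nd] by blast
  have cov: "\<forall>j<6. (\<exists>k. j = \<iota> k) \<or> j = e1 \<or> j = e2" and AB: "A ** B = mat 1"
    and dual: "\<And>k m. dot (column m B) (aa (\<iota> k)) = (if k = m then 1 else 0)"
    using all by blast+
  define \<alpha> where "\<alpha> m = column m B" for m
  define dd where "dd m = dot (\<alpha> m) (aa e2)" for m
  have cover: "P j" if "j < 6" "\<And>k. P (\<iota> k)" "P e1" "P e2" for P and j :: nat
  proof -
    have "(\<exists>k. j = \<iota> k) \<or> j = e1 \<or> j = e2" using cov that(1) by blast
    then show ?thesis using that(2-4) by (elim disjE exE) simp_all
  qed
  have dualA: "dot (\<alpha> m) (aa (\<iota> k)) = (if k = m then 1 else 0)" for k m
    unfolding \<alpha>_def by (rule dual)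
  from comb4[of dd] show False
  proof (elim disjE exE conjE)
    fix i j assume A: "i \<noteq> j" "dd i = 0" "dd j = 0"
    obtain w where w: "w \<noteq> 0" "dot (cc (\<iota> i)) w = 0" "dot (cc (\<iota> j)) w = 0" "dot (cc e1) w = 0"
      using orth3 by blast
    obtain v where v: "v \<noteq> 0" "dot (bb (\<iota> i)) v = 0" "dot (bb (\<iota> j)) v = 0" "dot (bb e1) v = 0"
      using orth3 by blast
    have cond: "dot (\<alpha> m) (aa jj) = 0 \<or> (dot (cc jj) w = 0 \<and> dot (bb jj) v = 0)"
      if "m = i \<or> m = j" "jj < 6" for m jj
      using \<open>jj < 6\<close>
    proof (rule cover)
      fix k show "dot (\<alpha> m) (aa (\<iota> k)) = 0 \<or> (dot (cc (\<iota> k)) w = 0 \<and> dot (bb (\<iota> k)) v = 0)"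
        using that(1) w v by (cases "k = m") (auto simp: dualA)
    next
      show "dot (\<alpha> m) (aa e1) = 0 \<or> (dot (cc e1) w = 0 \<and> dot (bb e1) v = 0)" using w v by simp
    next
      show "dot (\<alpha> m) (aa e2) = 0 \<or> (dot (cc e2) w = 0 \<and> dot (bb e2) v = 0)"
        using that(1) A by (auto simp: dd_def)
    qed
    have "rz (\<alpha> i) w" "rz (\<alpha> j) w" "lz (\<alpha> i) v" "lz (\<alpha> j) v"
      by (rule slice_right[OF H] slice_left[OF H], use cond in blast)+
    then obtain s t where st: "s \<noteq> 0 \<or> t \<noteq> 0" "s *s \<alpha> i + t *s \<alpha> j = 0"
      using pencil[OF w(1) v(1)] by blast
    have "dot (s *s \<alpha> i + t *s \<alpha> j) (aa (\<iota> i)) = s" "dot (s *s \<alpha> i + t *s \<alpha> j) (aa (\<iota> j)) = t"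
      using A(1) by (simp_all add: dot_lin dualA)
    then show False using st by (simp add: dot_def)
  next
    fix i j k l assume B: "distinct [i,j,k,l]" "UNIV = {i,j,k,l}" "dd i \<noteq> 0" "dd j \<noteq> 0" "dd k \<noteq> 0"
    have dZ: "detp (\<alpha> m) = 0" for m
    proof -
      obtain w where w: "w \<noteq> 0" "dot (cc (\<iota> m)) w = 0" "dot (cc e1) w = 0" "dot (cc e2) w = 0"
        using orth3 by blast
      have "rz (\<alpha> m) w"
      proof (rule slice_right[OF H], intro allI impI)
        fix jj :: nat assume "jj < 6"
        then show "dot (\<alpha> m) (aa jj) = 0 \<or> dot (cc jj) w = 0"
        proof (rule cover)
          fix k' show "dot (\<alpha> m) (aa (\<iota> k')) = 0 \<or> dot (cc (\<iota> k')) w = 0"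
            using w by (cases "k' = m") (auto simp: dualA)
        qed (use w in auto)
      qed
      then show ?thesis using rz_detp w(1) by blast
    qed
    have offZ: "Bf (\<alpha> m) (\<alpha> n) = 0" if "m \<noteq> n" "dd m \<noteq> 0" "dd n \<noteq> 0" for m n
    proof -
      define lam where "lam = dd n *s \<alpha> m + (- dd m) *s \<alpha> n"
      obtain w where w: "w \<noteq> 0" "dot (cc (\<iota> m)) w = 0" "dot (cc (\<iota> n)) w = 0" "dot (cc e1) w = 0"
        using orth3 by blast
      have "rz lam w"
      proof (rule slice_right[OF H], intro allI impI)
        fix jj :: nat assume "jj < 6"
        then show "dot lam (aa jj) = 0 \<or> dot (cc jj) w = 0"
        proof (rule cover)
          fix k' show "dot lam (aa (\<iota> k')) = 0 \<or> dot (cc (\<iota> k')) w = 0"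
          proof (cases "k' = m \<or> k' = n")
            case True then show ?thesis using w(2,3) by blast
          next
            case False
            have "dot lam (aa (\<iota> k')) = dd n * dot (\<alpha> m) (aa (\<iota> k')) + (- dd m) * dot (\<alpha> n) (aa (\<iota> k'))"
              unfolding lam_def by (rule dot_lin)
            also have "\<dots> = 0" using False by (simp add: dualA)
            finally show ?thesis by blast
          qed
        next
          have "dot lam (aa e2) = dd n * dd m + (- dd m) * dd n"
            unfolding lam_def dot_lin dd_def ..
          then show "dot lam (aa e2) = 0 \<or> dot (cc e2) w = 0" by (simp add: mult.commute)
        qed (use w in auto)
      qed
      then have "detp lam = 0" using rz_detp w(1) by blast
      moreover have "detp lam = dd n * (- dd m) * Bf (\<alpha> m) (\<alpha> n)"
        unfolding lam_def detp_comb by (simp add: dZ)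
      ultimately show ?thesis using that(2,3) by simp
    qed
    have Z: "Bf (column m B) (column n B) = 0" if "m \<in> {i,j,k}" "n \<in> {i,j,k}" for m n
    proof (cases "m = n")
      case True then show ?thesis using dZ Bf_diag by (simp add: \<alpha>_def[symmetric])
    next
      case False
      have "dd m \<noteq> 0" "dd n \<noteq> 0" using that B(3-5) by auto
      then show ?thesis using offZ[OF False] by (simp add: \<alpha>_def[symmetric])
    qed
    show False by (rule gram_contra[OF AB B(1,2) Z])
  qed
qed


lemma slice_U: "(\<Sum>x\<in>UNIV. l$x * U$(fst x, q, r)$(snd x, b, c)) = Sl l q b r c"
  using ex2[of q] ex2[of b] ex2[of r] ex2[of c]
  by (auto simp: sum22 U_ent Sl_def t2)

lemma lower:
  fixes r :: nat and A B C :: "nat \<Rightarrow> mat2"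
  assumes "U = (\<Sum>j<r. tensor3 (A j) (B j) (C j))" "r < 7"
  shows False
proof -
  define aa :: "nat \<Rightarrow> complex^(2\<times>2)" where "aa j = (\<chi> x. if j < r then A j $ fst x $ snd x else 0)" for j
  define bb :: "nat \<Rightarrow> complex^(2\<times>2)" where "bb j = (\<chi> x. if j < r then B j $ fst x $ snd x else 0)" for j
  define cc :: "nat \<Rightarrow> complex^(2\<times>2)" where "cc j = (\<chi> x. if j < r then C j $ fst x $ snd x else 0)" for j
  have Uent: "U$(p,q,s)$(a,b,c) = (\<Sum>j<6. aa j $ (p,a) * bb j $ (q,b) * cc j $ (s,c))" for p q s a b c
  proof -
    have "U$(p,q,s)$(a,b,c) = (\<Sum>j<r. A j $ p $ a * B j $ q $ b * C j $ s $ c)"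
      unfolding assms(1) sum_component by simp
    also have "\<dots> = (\<Sum>j<6. aa j $ (p,a) * bb j $ (q,b) * cc j $ (s,c))"
      using assms(2) by (intro sum.mono_neutral_cong_left) (auto simp: aa_def bb_def cc_def)
    finally show ?thesis .
  qed
  have H: "Sl l q b s c = (\<Sum>j<6. dot l (aa j) * bb j $ (q,b) * cc j $ (s,c))" for l q b s c
  proof -
    have "Sl l q b s c = (\<Sum>x\<in>UNIV. l$x * U$(fst x, q, s)$(snd x, b, c))" by (rule slice_U[symmetric])
    also have "\<dots> = (\<Sum>x\<in>UNIV. \<Sum>j<6. l$x * aa j $ x * bb j $ (q,b) * cc j $ (s,c))"
      by (simp add: Uent sum_distrib_left mult.assoc)
    also have "\<dots> = (\<Sum>j<6. \<Sum>x\<in>UNIV. l$x * aa j $ x * bb j $ (q,b) * cc j $ (s,c))" by (rule sum.swap)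
    also have "\<dots> = (\<Sum>j<6. dot l (aa j) * bb j $ (q,b) * cc j $ (s,c))"
      by (simp add: dot_def sum_distrib_right)
    finally show ?thesis .
  qed
  show False by (rule core[of aa bb cc, OF H])
qed

lemma id_tensor: "tensor3 id2 id2 id2 = mat 1"
proof (rule vec_eq_iff[THEN iffD2], rule allI, rule vec_eq_iff[THEN iffD2], rule allI)
  fix i j :: "2\<times>2\<times>2"
  obtain p q r where i: "i = (p,q,r)" by (metis prod_cases3)
  obtain a b c where j: "j = (a,b,c)" by (metis prod_cases3)
  show "tensor3 id2 id2 id2 $ i $ j = mat 1 $ i $ j" unfolding i j by (simp add: ent_simps mat_def)
qed

lemma unitary_id: "unitary2 id2"
proof -
  have "conj_transpose2 id2 = id2"
    by (simp add: conj_transpose2_def id2_def mat_def vec_eq_iff)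
  then show ?thesis by (simp add: unitary2_def id2_def)
qed

lemma lu_id: "local_unitary (mat 1)"
  unfolding local_unitary_def
  by (intro exI[of _ id2] conjI unitary_id id_tensor[symmetric])

theorem theorem7:
  shows "\<exists>L1 L2 L3 L4 :: mat8.
           local_unitary L1 \<and> local_unitary L2 \<and> local_unitary L3 \<and> local_unitary L4 \<and>
           schmidt_rank (L1 ** CNOT_AB ** L2 ** CNOT_BC ** L3 ** CNOT_CA ** L4) = 7"
proof (intro exI conjI)
  show "local_unitary (mat 1 :: mat8)" by (rule lu_id)
  show "local_unitary (mat 1 :: mat8)" by (rule lu_id)
  show "local_unitary (mat 1 :: mat8)" by (rule lu_id)
  show "local_unitary (mat 1 :: mat8)" by (rule lu_id)
  have e: "mat 1 ** CNOT_AB ** mat 1 ** CNOT_BC ** mat 1 ** CNOT_CA ** mat 1 = U"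
    by (simp add: U_def matrix_mul_lid matrix_mul_rid)
  show "schmidt_rank (mat 1 ** CNOT_AB ** mat 1 ** CNOT_BC ** mat 1 ** CNOT_CA ** mat 1) = 7"
    unfolding e schmidt_rank_def
  proof (rule Least_equality)
    show "\<exists>A B C :: nat \<Rightarrow> mat2. U = (\<Sum>j<7. tensor3 (A j) (B j) (C j))"
      by (rule exI[of _ "\<lambda>j. As!j"], rule exI[of _ "\<lambda>j. Bs!j"], rule exI[of _ "\<lambda>j. Cs!j"]) (rule U_decomp)
    fix r assume "\<exists>A B C :: nat \<Rightarrow> mat2. U = (\<Sum>j<r. tensor3 (A j) (B j) (C j))"
    then obtain A B C :: "nat \<Rightarrow> mat2" where "U = (\<Sum>j<r. tensor3 (A j) (B j) (C j))" by blast
    then have "\<not> r < 7" using lower[of A B C r] by blast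
    then show "7 \<le> r" by simp
  qed
qed

end
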